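(* Let $n>k+\ell$, and let $\mathcal F\subset\binom{[n]}{k}$ (non-trivial) and $\mathcal G\subset\binom{[n]}{\ell}$ be cross-intersecting families forming a saturated pair, shifted ad extremis with respect to $\tau(\mathcal F)\ge2$, and not both initial. Then the 2-cover graph $\hat{\mathcal H}$ of $\mathcal F$ is partially shifted.
   Context: Non-trivial: nonempty and not a star (a star is a family all of whose members share a common element); $\tau(\mathcal F)\ge2$ means $\mathcal F$ is not a star. Cross-intersecting: $F\cap G\ne\emptyset$ for all $F\in\mathcal F,G\in\mathcal G$; saturated pair: adding any further $k$-set to $\mathcal F$ or $\ell$-set to $\mathcal G$ destroys cross-intersection. Shifting: for $i<j$, $S_{ij}(F)=(F\setminus\{j\})\cup\{i\}$ if $j\in F$, $i\notin F$, $(F\setminus\{j\})\cup\{i\}\notin\mathcal F$, else $S_{ij}(F)=F$; $S_{ij}(\mathcal F)=\{S_{ij}(F):F\in\mathcal F\}$. Shifted ad extremis with respect to $\tau(\mathcal F)\ge2$: for every $1\le i<j\le n$, either $S_{ij}(\mathcal F)=\mathcal F$ and $S_{ij}(\mathcal G)=\mathcal G$, or $S_{ij}(\mathcal F)$ is a star. Initial: with $(a_1,\dots,a_k)\prec(b_1,\dots,b_k)$ iff $a_i\le b_i$ for all $i$, a family is initial if $A\prec B\in\mathcal F$ implies $A\in\mathcal F$. The 2-cover graph $\hat{\mathcal H}$ has vertex set $[n]$ and edges $\{i,j\}$ such that every $F\in\mathcal F$ meets $\{i,j\}$. A graph on $[n]$ is partially shifted if for all distinct $i,j,x$ with $x<j$: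 $\{i,j\}$ an edge and $\{x,j\}$ a non-edge imply $\{i,x\}$ is an edge. *)

theory Defs
  imports Main
begin

definition ksets :: "nat \<Rightarrow> nat \<Rightarrow> nat set set" where
  "ksets n k = {A. A \<subseteq> {1..n} \<and> card A = k}"

definition is_star :: "nat set set \<Rightarrow> bool" where
  "is_star F \<longleftrightarrow> (\<exists>x. \<forall>A\<in>F. x \<in> A)"

(* non-trivial: nonempty and not a star (tau(F) >= 2) *)
definition nontrivial :: "nat set set \<Rightarrow> bool" where
  "nontrivial F \<longleftrightarrow> F \<noteq> {} \<and> \<not> is_star F"

definition cross_intersecting :: "nat set set \<Rightarrow> nat set set \<Rightarrow> bool" where
  "cross_intersecting F G \<longleftrightarrow> (\<forall>A\<in>F. \<forall>B\<in>G. A \<inter> B \<noteq> {})"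

definition saturated_pair :: "nat \<Rightarrow> nat \<Rightarrow> nat \<Rightarrow> nat set set \<Rightarrow> nat set set \<Rightarrow> bool" where
  "saturated_pair n k l F G \<longleftrightarrow>
     (\<forall>A \<in> ksets n k - F. \<not> cross_intersecting (insert A F) G) \<and>
     (\<forall>B \<in> ksets n l - G. \<not> cross_intersecting F (insert B G))"

definition shift_set :: "nat \<Rightarrow> nat \<Rightarrow> nat set set \<Rightarrow> nat set \<Rightarrow> nat set" where
  "shift_set i j F A =
     (if j \<in> A \<and> i \<notin> A \<and> insert i (A - {j}) \<notin> F then insert i (A - {j}) else A)"

definition shift_family :: "nat \<Rightarrow> nat \<Rightarrow> nat set set \<Rightarrow> nat set set" where
  "shift_family i j F = shift_set i j F ` F"

definition shifted_ad_extremis :: "nat \<Rightarrow> nat set set \<Rightarrow> nat set set \<Rightarrow> bool" where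
  "shifted_ad_extremis n F G \<longleftrightarrow>
     (\<forall>i j. 1 \<le> i \<and> i < j \<and> j \<le> n \<longrightarrow>
        (shift_family i j F = F \<and> shift_family i j G = G) \<or> is_star (shift_family i j F))"

definition shift_prec :: "nat set \<Rightarrow> nat set \<Rightarrow> bool" where
  "shift_prec A B \<longleftrightarrow> card A = card B \<and>
     (\<forall>i < card A. sorted_list_of_set A ! i \<le> sorted_list_of_set B ! i)"

definition initial :: "nat \<Rightarrow> nat set set \<Rightarrow> bool" where
  "initial n F \<longleftrightarrow> (\<forall>B\<in>F. \<forall>A. A \<subseteq> {1..n} \<and> shift_prec A B \<longrightarrow> A \<in> F)"

definition cover2_edge :: "nat \<Rightarrow> nat set set \<Rightarrow> nat \<Rightarrow> nat \<Rightarrow> bool" where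
  "cover2_edge n F i j \<longleftrightarrow> i \<in> {1..n} \<and> j \<in> {1..n} \<and> i \<noteq> j \<and>
     (\<forall>A\<in>F. A \<inter> {i, j} \<noteq> {})"

definition partially_shifted :: "nat \<Rightarrow> (nat \<Rightarrow> nat \<Rightarrow> bool) \<Rightarrow> bool" where
  "partially_shifted n E \<longleftrightarrow>
     (\<forall>i\<in>{1..n}. \<forall>j\<in>{1..n}. \<forall>x\<in>{1..n}. i \<noteq> j \<and> i \<noteq> x \<and> x \<noteq> j \<and> x < j \<and>
        E i j \<and> \<not> E x j \<longrightarrow> E i x)"

end

theory Submission
  imports Defs
begin

theorem proposition1p3:
  fixes n k l :: nat and F G :: "nat set set"
  assumes "n > k + l"
    and "F \<subseteq> ksets n k" and "G \<subseteq> ksets n l"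
    and "nontrivial F"
    and "cross_intersecting F G"
    and "saturated_pair n k l F G"
    and "shifted_ad_extremis n F G"
    and "\<not> (initial n F \<and> initial n G)"
  shows "partially_shifted n (cover2_edge n F)"
  unfolding partially_shifted_def
proof (intro ballI impI)
  fix i j x
  assume i: "i \<in> {1..n}" and j: "j \<in> {1..n}" and x: "x \<in> {1..n}"
    and h: "i \<noteq> j \<and> i \<noteq> x \<and> x \<noteq> j \<and> x < j \<and> cover2_edge n F i j \<and> \<not> cover2_edge n F x j"
  have eij: "\<forall>A\<in>F. A \<inter> {i, j} \<noteq> {}" using h unfolding cover2_edge_def by blast
  obtain F0 where F0: "F0 \<in> F" "x \<notin> F0" "j \<notin> F0"
    using h x j unfolding cover2_edge_def by blast
  show "cover2_edge n F i x"
    unfolding cover2_edge_def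
  proof (intro conjI i x)
    show "i \<noteq> x" using h by blast
    show "\<forall>A\<in>F. A \<inter> {i, x} \<noteq> {}"
    proof (rule ccontr)
      assume "\<not> (\<forall>A\<in>F. A \<inter> {i, x} \<noteq> {})"
      then obtain F1 where F1: "F1 \<in> F" "i \<notin> F1" "x \<notin> F1" by blast
      have jF1: "j \<in> F1" using eij F1 by blast
      have "1 \<le> x \<and> x < j \<and> j \<le> n" using x j h by auto
      then have disj: "(shift_family x j F = F \<and> shift_family x j G = G) \<or> is_star (shift_family x j F)"
        using assms(7) unfolding shifted_ad_extremis_def by blast
      show False
      proof (cases "shift_family x j F = F")
        case True
        have "insert x (F1 - {j}) \<in> F"
        proof (cases "insert x (F1 - {j}) \<in> F")
          case False
          then have "shift_set x j F F1 = insert x (F1 - {j})"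
            using jF1 F1 unfolding shift_set_def by simp
          then have "insert x (F1 - {j}) \<in> shift_family x j F"
            using F1 unfolding shift_family_def by (metis imageI)
          then show ?thesis using True by simp
        qed
        moreover have "insert x (F1 - {j}) \<inter> {i, j} = {}" using F1 h by blast
        ultimately show False using eij by blast
      next
        case False
        then obtain c where c: "\<forall>A\<in>shift_family x j F. c \<in> A"
          using disj unfolding is_star_def by blast
        have "shift_set x j F F0 = F0" using F0 unfolding shift_set_def by simp
        then have "F0 \<in> shift_family x j F" using F0 unfolding shift_family_def by (metis imageI)
        then have cx: "c \<noteq> x" using c F0 by blast
        have "\<forall>A\<in>F. c \<in> A"
        proof
          fix A assume "A \<in> F"
          then have "c \<in> shift_set x j F A" using c unfolding shift_family_def by blast
          then show "c \<in> A" using cx unfolding shift_set_def by (cases "j \<in> A \<and> x \<notin> A \<and> insert x (A - {j}) \<notin> F") simp_all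
        qed
        then show False using assms(4) unfolding nontrivial_def is_star_def by blast
      qed
    qed
  qed
qed

end
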